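(* Suppose $l,m,j$ are integers with $m>0$, $|l|\le m/2$, $|j|\le m/8$. Then $$\mathbb{P}\{S_{2m}=2j+2l\mid S_{4m}=4l\}=2\sqrt{\frac{1}{2\pi m(1-(l/m)^2)}}\;\exp\Big\{-\frac{(2j)^2}{2m(1-(l/m)^2)}+O\Big(\frac1m\Big)+O\Big(\frac{j^4}{m^3}\Big)\Big\},$$ where the $O(\cdot)$ terms are bounded in absolute value by a universal constant times the indicated quantities, uniformly over all such $l,m,j$.
   Context: $S_n$ is simple random walk on $\mathbb{Z}$ started at $0$, with i.i.d. steps equal to $\pm1$ with probability $1/2$ each. *)

theory Defs
  imports "HOL-Probability.Probability"
begin

definition srw_steps :: "nat \<Rightarrow> int list pmf" where
  "srw_steps n = pmf_of_set {xs. length xs = n \<and> set xs \<subseteq> {-1, 1}}"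

definition S :: "nat \<Rightarrow> int list \<Rightarrow> int" where
  "S k xs = sum_list (take k xs)"

definition cond_prob :: "'a pmf \<Rightarrow> 'a set \<Rightarrow> 'a set \<Rightarrow> real" where
  "cond_prob M A B = measure_pmf.prob M (A \<inter> B) / measure_pmf.prob M B"

end

theory Submission
  imports Defs "HOL-Real_Asymp.Real_Asymp"
begin


definition pm :: "nat \<Rightarrow> int \<Rightarrow> int list set" where
  "pm n s = {xs. length xs = n \<and> set xs \<subseteq> {-1, 1} \<and> sum_list xs = s}"

lemma sum_list_ge: "set xs \<subseteq> {-1, 1} \<Longrightarrow> sum_list xs \<ge> - int (length xs)"
  by (induction xs) auto

lemma pm_finite: "finite (pm n s)"
proof -
  have "pm n s \<subseteq> {xs. set xs \<subseteq> {-1,1} \<and> length xs = n}" unfolding pm_def by auto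
  moreover have "finite {xs. set xs \<subseteq> {-1::int,1} \<and> length xs = n}"
    by (rule finite_lists_length_eq) simp
  ultimately show ?thesis by (rule finite_subset)
qed

lemma pm_Suc: "pm (Suc n) s = (Cons 1 ` pm n (s - 1)) \<union> (Cons (-1) ` pm n (s + 1))"
proof (intro set_eqI iffI)
  fix xs assume "xs \<in> pm (Suc n) s"
  then obtain y ys where xs: "xs = y # ys" and "length ys = n" "set ys \<subseteq> {-1,1}" "y \<in> {-1,1}" "y + sum_list ys = s"
    unfolding pm_def by (cases xs) auto
  then show "xs \<in> (Cons 1 ` pm n (s - 1)) \<union> (Cons (-1) ` pm n (s + 1))"
    unfolding pm_def by auto
next
  fix xs assume "xs \<in> (Cons 1 ` pm n (s - 1)) \<union> (Cons (-1) ` pm n (s + 1))"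
  then show "xs \<in> pm (Suc n) s" unfolding pm_def by auto
qed

lemma card_pm: "card (pm n (2 * int k - int n)) = n choose k"
proof (induction n arbitrary: k)
  case 0
  have "pm 0 s = (if s = 0 then {[]} else {})" for s unfolding pm_def by auto
  then show ?case by (cases k) auto
next
  case (Suc n)
  have disj: "(Cons 1 ` pm n s1) \<inter> (Cons (-1) ` pm n s2) = {}" for s1 s2 by auto
  have c: "card (pm (Suc n) s) = card (pm n (s - 1)) + card (pm n (s + 1))" for s
    unfolding pm_Suc
    by (subst card_Un_disjoint) (auto simp: pm_finite disj card_image)
  show ?case
  proof (cases k)
    case 0
    have "pm n (- int (Suc n) - 1) = {}" unfolding pm_def using sum_list_ge by fastforce
    moreover have "- int (Suc n) + 1 = 2 * int 0 - int n" by simp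
    ultimately show ?thesis using c[of "- int (Suc n)"] Suc.IH[of 0] 0 by simp
  next
    case (Suc k')
    have e1: "2 * int k - int (Suc n) - 1 = 2 * int k' - int n" using Suc by simp
    have e2: "2 * int k - int (Suc n) + 1 = 2 * int (Suc k') - int n" using Suc by simp
    have i1: "card (pm n (2 * int k' - int n)) = n choose k'" by (rule Suc.IH)
    have i2: "card (pm n (2 * int (Suc k') - int n)) = n choose (Suc k')" by (rule Suc.IH)
    have "card (pm (Suc n) (2 * int k - int (Suc n))) = (n choose k') + (n choose (Suc k'))"
      using c[of "2 * int k - int (Suc n)"] unfolding e1 e2 i1 i2 .
    then show ?thesis using Suc by simp
  qed
qed

lemma Omega_finite: "finite {xs. length xs = n \<and> set xs \<subseteq> {-1::int, 1}}"
  using finite_lists_length_eq[of "{-1::int,1}" n] by (simp add: conj_commute)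

lemma Omega_ne: "{xs. length xs = n \<and> set xs \<subseteq> {-1::int, 1}} \<noteq> {}"
proof -
  have "replicate n 1 \<in> {xs. length xs = n \<and> set xs \<subseteq> {-1::int, 1}}" by auto
  then show ?thesis by blast
qed

lemma prob_srw: "measure_pmf.prob (srw_steps n) A =
   card ({xs. length xs = n \<and> set xs \<subseteq> {-1, 1}} \<inter> A) / card {xs. length xs = n \<and> set xs \<subseteq> {-1::int, 1}}"
  unfolding srw_steps_def by (rule measure_pmf_of_set[OF Omega_ne Omega_finite])

lemma joint_set:
  "{xs. length xs = n1 + n2 \<and> set xs \<subseteq> {-1, 1}} \<inter> ({xs. S n1 xs = s1} \<inter> {xs. S (n1 + n2) xs = s})
   = (\<lambda>(u,v). u @ v) ` (pm n1 s1 \<times> pm n2 (s - s1))"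
proof (intro set_eqI iffI)
  fix xs assume xs: "xs \<in> {xs. length xs = n1 + n2 \<and> set xs \<subseteq> {-1, 1}} \<inter> ({xs. S n1 xs = s1} \<inter> {xs. S (n1 + n2) xs = s})"
  let ?u = "take n1 xs" and ?v = "drop n1 xs"
  have "xs = ?u @ ?v" by simp
  moreover have "?u \<in> pm n1 s1" using xs set_take_subset[of n1 xs] unfolding pm_def S_def by auto
  moreover have "?v \<in> pm n2 (s - s1)"
  proof -
    have "sum_list xs = sum_list ?u + sum_list ?v" by (subst append_take_drop_id[symmetric, of _ n1], subst sum_list_append) simp
    then show ?thesis using xs set_drop_subset[of n1 xs] unfolding pm_def S_def by auto
  qed
  ultimately show "xs \<in> (\<lambda>(u,v). u @ v) ` (pm n1 s1 \<times> pm n2 (s - s1))"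
    by (intro image_eqI[where x="(?u, ?v)"]) auto
next
  fix xs assume "xs \<in> (\<lambda>(u,v). u @ v) ` (pm n1 s1 \<times> pm n2 (s - s1))"
  then obtain u v where xs: "xs = u @ v" and u: "u \<in> pm n1 s1" and v: "v \<in> pm n2 (s - s1)" by auto
  then show "xs \<in> {xs. length xs = n1 + n2 \<and> set xs \<subseteq> {-1, 1}} \<inter> ({xs. S n1 xs = s1} \<inter> {xs. S (n1 + n2) xs = s})"
    unfolding pm_def S_def by auto
qed

lemma marg_set:
  "{xs. length xs = n \<and> set xs \<subseteq> {-1, 1}} \<inter> {xs. S n xs = s} = pm n s"
  unfolding pm_def S_def by (auto simp del: set_subset_Cons)

lemma card_joint: "card ((\<lambda>(u,v). u @ v) ` (pm n1 s1 \<times> pm n2 s2)) = card (pm n1 s1) * card (pm n2 s2)"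
proof -
  have "inj_on (\<lambda>(u,v). u @ v) (pm n1 s1 \<times> pm n2 s2)"
  proof (rule inj_onI)
    fix p q assume p: "p \<in> pm n1 s1 \<times> pm n2 s2" and q: "q \<in> pm n1 s1 \<times> pm n2 s2"
      and e: "(\<lambda>(u,v). u @ v) p = (\<lambda>(u,v). u @ v) q"
    obtain u v u' v' where pq: "p = (u,v)" "q = (u',v')" by (cases p, cases q) auto
    have "length u = length u'" using p q pq unfolding pm_def by auto
    then show "p = q" using e pq by simp
  qed
  then show ?thesis by (simp add: card_image card_cartesian_product)
qed

lemma cond_prob_binom:
  fixes m :: nat and l j :: int and a b d :: nat
  assumes "2 * j + 2 * l = 2 * int a - 2 * int m" "4 * l - (2 * j + 2 * l) = 2 * int b - 2 * int m"
    "4 * l = 2 * int d - 4 * int m"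
  shows "cond_prob (srw_steps (4 * m)) {xs. S (2 * m) xs = 2 * j + 2 * l} {xs. S (4 * m) xs = 4 * l}
     = real ((2*m) choose a) * real ((2*m) choose b) / real ((4*m) choose d)"
proof -
  let ?O = "{xs. length xs = 4*m \<and> set xs \<subseteq> {-1::int, 1}}"
  have O0: "card ?O \<noteq> 0" using Omega_ne Omega_finite by (simp add: card_eq_0_iff)
  have e: "4 * m = 2 * m + 2 * m" by simp
  have j: "?O \<inter> ({xs. S (2*m) xs = 2 * j + 2 * l} \<inter> {xs. S (4*m) xs = 4*l})
     = (\<lambda>(u,v). u @ v) ` (pm (2*m) (2 * j + 2 * l) \<times> pm (2*m) (4*l - (2 * j + 2 * l)))"
    using joint_set[of "2*m" "2*m" "2 * j + 2 * l" "4*l"] unfolding e[symmetric] .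
  have c1: "card (pm (2*m) (2 * j + 2 * l)) = (2*m) choose a"
    using card_pm[of "2*m" a] assms(1) by simp
  have c2: "card (pm (2*m) (4*l - (2 * j + 2 * l))) = (2*m) choose b"
    using card_pm[of "2*m" b] assms(2) by simp
  have c3: "card (pm (4*m) (4*l)) = (4*m) choose d"
    using card_pm[of "4*m" d] assms(3) by simp
  show ?thesis
    unfolding cond_prob_def prob_srw j marg_set card_joint c1 c2 c3 using O0
    by (simp add: field_simps)
qed



lemma ln_taylor:
  fixes s :: real and N :: nat
  assumes s: "\<bar>s\<bar> < 1"
  shows "\<bar>ln (1 + s) - (\<Sum>n<N. (-1)^n / real (n+1) * s^(n+1))\<bar> \<le> \<bar>s\<bar>^(N+1) / (1 - \<bar>s\<bar>)"
proof -
  define f where "f n = (-1)^n * (1 / real (n+1)) * s^(Suc n)" for n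
  have ln: "ln (1+s) = suminf f"
    using ln_series[of "1+s"] s unfolding f_def by simp
  have bd: "norm (f n) \<le> \<bar>s\<bar>^(Suc n)" for n
  proof -
    have "norm (f n) = \<bar>s\<bar>^(Suc n) / real (n+1)" unfolding f_def by (simp add: abs_mult power_abs)
    also have "\<dots> \<le> \<bar>s\<bar>^(Suc n)"
      using mult_left_mono[of 1 "1 + real n" "\<bar>s\<bar>^Suc n"] by (simp add: divide_le_eq)
    finally show ?thesis .
  qed
  have g: "(\<lambda>n. \<bar>s\<bar>^(Suc n + N)) sums (\<bar>s\<bar>^(N+1) / (1 - \<bar>s\<bar>))"
  proof -
    have "(\<lambda>n. \<bar>s\<bar>^(N+1) * \<bar>s\<bar>^n) sums (\<bar>s\<bar>^(N+1) * (1 / (1 - \<bar>s\<bar>)))"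
      by (rule sums_mult) (rule geometric_sums, simp add: s)
    moreover have "(\<lambda>n. \<bar>s\<bar>^(N+1) * \<bar>s\<bar>^n) = (\<lambda>n. \<bar>s\<bar>^(Suc n + N))"
      by (simp add: power_add mult_ac)
    ultimately show ?thesis by simp
  qed
  have sg0: "summable (\<lambda>n. \<bar>s\<bar>^(Suc n))"
    using summable_geometric[of "\<bar>s\<bar>"] s by (simp add: summable_mult)
  have sf: "summable f"
    by (rule summable_comparison_test[OF _ sg0]) (use bd in auto)
  have sfN: "summable (\<lambda>n. f (n + N))" using sf by (simp add: summable_iff_shift)
  have split: "suminf f = (\<Sum>n. f (n + N)) + (\<Sum>i<N. f i)"
    by (rule suminf_split_initial_segment[OF sf])
  have sn: "summable (\<lambda>n. norm (f (n + N)))"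
    by (rule summable_comparison_test[OF _ summable_ignore_initial_segment[OF sg0, of N]])
       (use bd in \<open>auto simp: add.commute\<close>)
  have "\<bar>\<Sum>n. f (n + N)\<bar> \<le> (\<Sum>n. norm (f (n + N)))"
    using summable_norm[OF sn] by simp
  also have "\<dots> \<le> (\<Sum>n. \<bar>s\<bar>^(Suc n + N))"
    by (rule suminf_le) (use bd sn g in \<open>auto simp: sums_iff\<close>)
  also have "\<dots> = \<bar>s\<bar>^(N+1) / (1 - \<bar>s\<bar>)" using g by (simp add: sums_iff)
  finally have "\<bar>\<Sum>n. f (n + N)\<bar> \<le> \<bar>s\<bar>^(N+1) / (1 - \<bar>s\<bar>)" .
  moreover have "(\<Sum>n<N. (-1)^n / real (n+1) * s^(n+1)) = (\<Sum>i<N. f i)"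
    unfolding f_def by simp
  ultimately show ?thesis unfolding ln split by simp
qed


definition Lf :: "nat \<Rightarrow> real" where
  "Lf n = ln (fact n) - ((real n + 1/2) * ln (real n) - real n)"

lemma Lf_diff: "n \<ge> 1 \<Longrightarrow> Lf n - Lf (Suc n) = (real n + 1/2) * ln (1 + 1 / real n) - 1"
proof -
  assume n: "n \<ge> 1"
  have f: "ln (fact (Suc n) :: real) = ln (real n + 1) + ln (fact n)"
    by (simp add: ln_mult add.commute)
  have l: "ln (1 + 1 / real n) = ln (real n + 1) - ln (real n)"
  proof -
    have "1 + 1 / real n = (real n + 1) / real n" using n by (simp add: field_simps)
    then show ?thesis using n by (simp add: ln_div)
  qed
  show ?thesis unfolding Lf_def f l by (simp add: algebra_simps)
qed

lemma Lf_step: "n \<ge> 1 \<Longrightarrow> \<bar>Lf n - Lf (Suc n)\<bar> \<le> 2 / real n ^ 2"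
proof -
  assume n: "n \<ge> 1"
  show ?thesis
  proof (cases "n = 1")
    case True
    have a: "ln (2::real) \<le> 1" using ln_le_minus_one[of 2] by simp
    have b: "ln (2::real) \<ge> 0" by simp
    have d: "Lf n - Lf (Suc n) = 3 * ln 2 / 2 - 1" using Lf_diff[OF n] True by simp
    have "2 / real n ^ 2 = 2" using True by simp
    then show ?thesis unfolding d abs_le_iff using a b by linarith
  next
    case False
    then have n2: "real n \<ge> 2" using n by simp
    define s where "s = 1 / real n"
    have s0: "0 < s" "s \<le> 1/2" using n2 by (auto simp: s_def field_simps)
    have t: "\<bar>ln (1 + s) - (s - s^2/2 + s^3/3)\<bar> \<le> s^4 / (1 - s)"
      using ln_taylor[of s 3] s0 by (simp add: eval_nat_numeral)
    have "s^4 / (1 - s) \<le> 2 * s^4" using s0 by (simp add: field_simps)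
    with t obtain E where E: "ln (1 + s) = s - s^2/2 + s^3/3 + E" "\<bar>E\<bar> \<le> 2 * s^4"
      by (metis add_diff_cancel_left' diff_add_cancel order.trans)
    have main: "(real n + 1/2) * (s - s^2/2 + s^3/3) - 1 = 1 / (12 * real n ^ 2) + 1 / (6 * real n ^ 3)"
      using n2 unfolding s_def by (simp add: field_simps power2_eq_square power3_eq_cube)
    have "\<bar>(real n + 1/2) * E\<bar> \<le> (real n + 1/2) * (2 * s^4)"
      using E(2) n2 by (simp add: abs_mult mult_left_mono)
    also have "\<dots> = (2 * real n + 1) / real n ^ 4" unfolding s_def using n2
      by (simp add: field_simps)
    also have "\<dots> \<le> 3 / real n ^ 3" using n2 by (simp add: field_simps eval_nat_numeral)
    finally have eb: "\<bar>(real n + 1/2) * E\<bar> \<le> 3 / real n ^ 3" .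
    have "Lf n - Lf (Suc n) = 1 / (12 * real n ^ 2) + 1 / (6 * real n ^ 3) + (real n + 1/2) * E"
      using Lf_diff[OF n] E(1) main unfolding s_def by (simp add: algebra_simps)
    moreover have "1 / (12 * real n ^ 2) + 1 / (6 * real n ^ 3) + 3 / real n ^ 3 \<le> 2 / real n ^ 2"
      using n2 by (simp add: field_simps eval_nat_numeral)
    moreover have "0 \<le> 1 / (12 * real n ^ 2) + 1 / (6 * real n ^ 3)" by simp
    ultimately show ?thesis using eb by linarith
  qed
qed


lemma Lf_step2: "n \<ge> 1 \<Longrightarrow> \<bar>Lf n - Lf (Suc n)\<bar> \<le> 4 / real n - 4 / real (Suc n)"
proof -
  assume n: "n \<ge> 1"
  have x: "real n \<ge> 1" using n by simp
  have e: "4 / real n - 4 / real (Suc n) = 4 / (real n * (real n + 1))" using x by (simp add: field_simps)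
  have "2 / real n ^ 2 \<le> 4 / (real n * (real n + 1))"
    using x by (simp add: divide_simps power2_eq_square)
  then have "2 / real n ^ 2 \<le> 4 / real n - 4 / real (Suc n)" unfolding e .
  then show ?thesis using Lf_step[OF n] by linarith
qed

lemma Lf_conv: "\<exists>c. Lf \<longlonglongrightarrow> c \<and> (\<forall>n\<ge>1. \<bar>Lf n - c\<bar> \<le> 4 / real n)"
proof -
  define a where "a k = Lf (Suc k) - 4 / real (Suc k)" for k
  define b where "b k = Lf (Suc k) + 4 / real (Suc k)" for k
  have st: "\<bar>Lf (Suc k) - Lf (Suc (Suc k))\<bar> \<le> 4 / real (Suc k) - 4 / real (Suc (Suc k))" for k
    using Lf_step2[of "Suc k"] by simp
  have ia: "incseq a"
  proof (rule incseq_SucI)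
    fix k show "a k \<le> a (Suc k)" using st[of k] unfolding a_def by (simp add: abs_le_iff)
  qed
  have db: "decseq b"
  proof (rule decseq_SucI)
    fix k show "b (Suc k) \<le> b k" using st[of k] unfolding b_def by (simp add: abs_le_iff)
  qed
  have ab: "a k \<le> b 0" for k
  proof -
    have "a k \<le> b k" unfolding a_def b_def by simp
    also have "\<dots> \<le> b 0" using db by (simp add: decseqD)
    finally show ?thesis .
  qed
  obtain c where ac: "a \<longlonglongrightarrow> c" using incseq_convergent[OF ia, of "b 0"] ab by blast
  have z: "(\<lambda>k. 4 / real (Suc k)) \<longlonglongrightarrow> 0" by real_asymp
  have l1: "(\<lambda>k. Lf (Suc k)) \<longlonglongrightarrow> c"
  proof -
    have "(\<lambda>k. a k + 4 / real (Suc k)) \<longlonglongrightarrow> c + 0" by (intro tendsto_add ac z)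
    then show ?thesis unfolding a_def by simp
  qed
  have bc: "b \<longlonglongrightarrow> c"
  proof -
    have "(\<lambda>k. Lf (Suc k) + 4 / real (Suc k)) \<longlonglongrightarrow> c + 0" by (intro tendsto_add l1 z)
    then show ?thesis unfolding b_def by simp
  qed
  have "Lf \<longlonglongrightarrow> c" using l1 filterlim_sequentially_Suc[of Lf] by simp
  moreover have "\<bar>Lf n - c\<bar> \<le> 4 / real n" if n: "n \<ge> 1" for n
  proof -
    obtain k where k: "n = Suc k" using n by (cases n) auto
    have "a k \<le> c" by (rule incseq_le[OF ia ac])
    moreover have "c \<le> b k" by (rule decseq_ge[OF db bc])
    ultimately show ?thesis unfolding a_def b_def k by (simp add: abs_le_iff)
  qed
  ultimately show ?thesis by blast
qed

lemma wallis_aux: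
  fixes A F G x :: real
  assumes "G > 0" "x \<ge> 0"
  shows "A * F^4 / (G^2 * (2 * x + 1)) * ((4 * (1 + x)^2) / (4 * (1 + x)^2 - 1)) =
     16 * A * ((1 + x) * F)^4 / (((2 * x + 2) * (2 * x + 1) * G)^2 * (2 * (1 + x) + 1))"
proof -
  have e: "4 * (1 + x)^2 - 1 = (2 * x + 1) * (2 * x + 3)" by algebra
  have e2: "2 * (1 + x) + 1 = 2 * x + 3" by simp
  have p: "2 * x + 1 > 0" "2 * x + 3 > 0" "1 + x > 0" "2 * x + 2 > 0" using assms by auto
  have r: "((2 * x + 2) * (2 * x + 1) * G)^2 = 4 * (1 + x)^2 * (2 * x + 1)^2 * G^2" by algebra
  have d1: "G^2 * (2 * x + 1) * ((2 * x + 1) * (2 * x + 3)) \<noteq> 0" using p assms by simp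
  have d2: "4 * (1 + x)^2 * (2 * x + 1)^2 * G^2 * (2 * x + 3) \<noteq> 0" using p assms by simp
  show ?thesis unfolding e e2 r times_divide_times_eq frac_eq_eq[OF d1 d2] by algebra
qed

lemma wallis_id: "(\<Prod>k=1..n. (4*real k^2) / (4*real k^2 - 1)) = 16^n * (fact n)^4 / ((fact (2*n))^2 * (2 * real n + 1))"
proof (induction n)
  case 0 then show ?case by simp
next
  case (Suc n)
  have f2: "(fact (2 * Suc n) :: real) = (2 * real n + 2) * (2 * real n + 1) * fact (2 * n)"
    by (simp add: algebra_simps)
  have p: "(fact (2*n) :: real) > 0" "(fact n :: real) > 0" by simp_all
  have "(\<Prod>k=1..Suc n. (4*real k^2) / (4*real k^2 - 1)) =
        (\<Prod>k=1..n. (4*real k^2) / (4*real k^2 - 1)) * ((4*real (Suc n)^2) / (4*real (Suc n)^2 - 1))"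
    by simp
  also have "\<dots> = 16^(Suc n) * (fact (Suc n))^4 / ((fact (2*Suc n))^2 * (2 * real (Suc n) + 1))"
    unfolding Suc.IH f2 fact_Suc of_nat_mult of_nat_Suc power_Suc[of 16] using p by (intro wallis_aux) simp_all
  finally show ?case .
qed


lemma ln_fact_Lf: "n \<ge> 1 \<Longrightarrow> ln (fact n :: real) = Lf n + (real n + 1/2) * ln (real n) - real n"
  unfolding Lf_def by simp

lemma ln_W: assumes n: "n \<ge> 1"
  shows "ln (\<Prod>k=1..n. (4*real k^2) / (4*real k^2 - 1)) =
    4 * Lf n - 2 * Lf (2 * n) + ln (real n / (2 * real n + 1)) - ln 2"
proof -
  have F: "(fact n :: real) > 0" and G: "(fact (2*n) :: real) > 0" by simp_all
  have "ln (\<Prod>k=1..n. (4*real k^2) / (4*real k^2 - 1)) =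
        ln (16^n) + ln ((fact n :: real)^4) - ln ((fact (2*n) :: real)^2) - ln (2 * real n + 1)"
    unfolding wallis_id using F G by (simp add: ln_mult ln_div)
  also have "\<dots> = real n * (4 * ln 2) + 4 * ln (fact n) - 2 * ln (fact (2 * n)) - ln (2 * real n + 1)"
  proof -
    have "ln ((16::real)^n) = real n * ln 16" by (simp add: ln_realpow)
    moreover have "ln (16::real) = 4 * ln 2" using ln_realpow[of 2 4] by simp
    ultimately show ?thesis using F G by (simp add: ln_realpow)
  qed
  also have "\<dots> = 4 * Lf n - 2 * Lf (2 * n) + ln (real n / (2 * real n + 1)) - ln 2"
  proof -
    have a: "ln (fact (2 * n) :: real) = Lf (2*n) + (2 * real n + 1/2) * (ln 2 + ln (real n)) - 2 * real n"
      using ln_fact_Lf[of "2*n"] n by (simp add: ln_mult)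
    have b: "ln (real n / (2 * real n + 1)) = ln (real n) - ln (2 * real n + 1)"
      using n by (simp add: ln_div)
    show ?thesis unfolding a b ln_fact_Lf[OF n] by (simp add: algebra_simps)
  qed
  finally show ?thesis .
qed

lemma Lf_limit: "Lf \<longlonglongrightarrow> ln (2 * pi) / 2"
proof -
  obtain c where c: "Lf \<longlonglongrightarrow> c" using Lf_conv by blast
  define W where "W n = (\<Prod>k=1..n. (4*real k^2) / (4*real k^2 - 1))" for n
  have w: "W \<longlonglongrightarrow> pi / 2" unfolding W_def by (rule wallis)
  have w1: "(\<lambda>k. ln (W (Suc k))) \<longlonglongrightarrow> ln (pi / 2)"
    by (rule tendsto_ln) (use w filterlim_sequentially_Suc[of W] in simp_all)
  have l1: "(\<lambda>k. Lf (Suc k)) \<longlonglongrightarrow> c" using c filterlim_sequentially_Suc[of Lf] by simp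
  have sm: "strict_mono (\<lambda>k::nat. 2 * Suc k)" by (rule strict_monoI) simp
  have l2: "(\<lambda>k. Lf (2 * Suc k)) \<longlonglongrightarrow> c" using LIMSEQ_subseq_LIMSEQ[OF c sm] by (simp add: comp_def)
  have l3: "(\<lambda>k. ln (real (Suc k) / (2 * real (Suc k) + 1))) \<longlonglongrightarrow> ln (1/2)" by real_asymp
  have "(\<lambda>k. 4 * Lf (Suc k) - 2 * Lf (2 * Suc k) + ln (real (Suc k) / (2 * real (Suc k) + 1)) - ln 2)
         \<longlonglongrightarrow> 4 * c - 2 * c + ln (1/2) - ln 2"
    by (intro tendsto_intros l1 l2 l3)
  moreover have "(\<lambda>k. ln (W (Suc k))) = (\<lambda>k. 4 * Lf (Suc k) - 2 * Lf (2 * Suc k) + ln (real (Suc k) / (2 * real (Suc k) + 1)) - ln 2)"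
    unfolding W_def by (rule ext) (rule ln_W, simp)
  ultimately have "ln (pi / 2) = 4 * c - 2 * c + ln (1/2) - ln 2"
    using w1 LIMSEQ_unique by metis
  then have "c * 2 = ln (2 * pi)"
    by (simp add: ln_div ln_mult)
  then have cc: "c = ln (2 * pi) / 2" by linarith
  show ?thesis using c unfolding cc .
qed

lemma stirling_ln:
  assumes "n \<ge> 1"
  shows "\<bar>ln (fact n :: real) - ((real n + 1/2) * ln (real n) - real n + ln (2 * pi) / 2)\<bar> \<le> 4 / real n"
proof -
  obtain c where c: "Lf \<longlonglongrightarrow> c" "\<forall>n\<ge>1. \<bar>Lf n - c\<bar> \<le> 4 / real n" using Lf_conv by blast
  have cc: "c = ln (2 * pi) / 2" using LIMSEQ_unique[OF c(1) Lf_limit] .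
  have "\<bar>Lf n - c\<bar> \<le> 4 / real n" using c(2) assms by blast
  then show ?thesis unfolding cc Lf_def by (simp add: algebra_simps)
qed



lemma psi_bound:
  fixes t :: real assumes t: "\<bar>t\<bar> \<le> 1/4"
  shows "\<bar>(1 + t) * ln (1 + t) + (1 - t) * ln (1 - t) - (t^2)\<bar> \<le> 4 * t^4"
proof -
  have q: "\<bar>t\<bar>^(3+1) / (1 - \<bar>t\<bar>) \<le> 4/3 * t^4"
  proof -
    have "1 - \<bar>t\<bar> \<ge> 3/4" using t by simp
    then have "\<bar>t\<bar>^4 / (1 - \<bar>t\<bar>) \<le> \<bar>t\<bar>^4 / (3/4)"
      by (intro divide_left_mono) auto
    also have "\<dots> = 4/3 * t^4" by (simp add: power_abs[symmetric] field_simps)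
    finally show ?thesis by simp
  qed
  have tl: "\<bar>t\<bar> < 1" "\<bar>-t\<bar> < 1" using t by auto
  have s3: "(\<Sum>n<3. (-1)^n / real (n+1) * s^(n+1)) = s - s^2/2 + s^3/3" for s :: real
    by (simp add: eval_nat_numeral)
  have t1: "\<bar>ln (1 + t) - (t - (t^2)/2 + t^3/3)\<bar> \<le> 4/3 * t^4"
    using order.trans[OF ln_taylor[of t 3, OF tl(1), unfolded s3] q] .
  have t2: "\<bar>ln (1 + (-t)) - ((-t) - (-t)^2/2 + (-t)^3/3)\<bar> \<le> 4/3 * t^4"
    using order.trans[OF ln_taylor[of "-t" 3, OF tl(2), unfolded s3] q[unfolded abs_minus_cancel[symmetric, of t]]] by simp
  obtain E1 where E1: "ln (1 + t) = t - (t^2)/2 + t^3/3 + E1" "\<bar>E1\<bar> \<le> 4/3 * t^4"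
    using t1 by (intro that[of "ln (1 + t) - (t - (t^2)/2 + t^3/3)"]) simp_all
  obtain E2 where E2: "ln (1 - t) = - t - (t^2)/2 - t^3/3 + E2" "\<bar>E2\<bar> \<le> 4/3 * t^4"
    using t2 by (intro that[of "ln (1 - t) - (- t - (t^2)/2 - t^3/3)"]) (simp_all add: eval_nat_numeral)
  have eq: "(1 + t) * ln (1 + t) + (1 - t) * ln (1 - t) - (t^2) = 2/3 * t^4 + (1 + t) * E1 + (1 - t) * E2"
    unfolding E1(1) E2(1) by (simp add: field_simps eval_nat_numeral)
  have a1: "\<bar>(1 + t) * E1\<bar> \<le> 5/4 * (4/3 * t^4)"
    unfolding abs_mult by (rule mult_mono) (use t E1(2) in auto)
  have a2: "\<bar>(1 - t) * E2\<bar> \<le> 5/4 * (4/3 * t^4)"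
    unfolding abs_mult by (rule mult_mono) (use t E2(2) in auto)
  have "0 \<le> t^4" by simp
  then show ?thesis unfolding eq using a1 a2 by (simp add: abs_le_iff) linarith
qed


lemma h_bound:
  fixes u y :: real assumes u: "u \<ge> 1/2" and y: "\<bar>y\<bar> \<le> 1/8"
  shows "\<bar>(u + y) * ln (u + y) + (u - y) * ln (u - y) - 2 * u * ln u - y^2 / u\<bar> \<le> 32 * y^4"
proof -
  define t where "t = y / u"
  have u0: "u > 0" using u by simp
  have yt: "y = u * t" unfolding t_def using u0 by simp
  have ta: "\<bar>t\<bar> \<le> 1/4"
  proof -
    have "\<bar>t\<bar> = \<bar>y\<bar> / u" unfolding t_def using u0 by simp
    also have "\<dots> \<le> (1/8) / (1/2)" by (rule frac_le) (use y u in auto)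
    finally show ?thesis by simp
  qed
  have p: "1 + t > 0" "1 - t > 0" using ta by auto
  have l1: "ln (u + y) = ln u + ln (1 + t)"
  proof -
    have "u + y = u * (1 + t)" unfolding yt by (simp add: algebra_simps)
    then have "ln (u + y) = ln (u * (1 + t))" by simp
    also have "\<dots> = ln u + ln (1 + t)" using u0 p by (simp add: ln_mult)
    finally show ?thesis .
  qed
  have l2: "ln (u - y) = ln u + ln (1 - t)"
  proof -
    have "u - y = u * (1 - t)" unfolding yt by (simp add: algebra_simps)
    then have "ln (u - y) = ln (u * (1 - t))" by simp
    also have "\<dots> = ln u + ln (1 - t)" using u0 p by (simp add: ln_mult)
    finally show ?thesis .
  qed
  have eq: "(u + y) * ln (u + y) + (u - y) * ln (u - y) - 2 * u * ln u - y^2 / u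
      = u * ((1 + t) * ln (1 + t) + (1 - t) * ln (1 - t) - (t^2))"
    unfolding l1 l2 unfolding yt using u0 by (simp add: field_simps power2_eq_square)
  have "\<bar>u * ((1 + t) * ln (1 + t) + (1 - t) * ln (1 - t) - (t^2))\<bar> \<le> u * (4 * t^4)"
    unfolding abs_mult using psi_bound[OF ta] u0 by (simp add: mult_left_mono)
  also have "\<dots> = 4 * y^4 / u^3" unfolding yt using u0 by (simp add: field_simps eval_nat_numeral)
  also have "\<dots> \<le> 4 * y^4 / (1/2)^3"
    by (rule divide_left_mono) (use u in \<open>auto intro!: power_mono\<close>)
  also have "\<dots> = 32 * y^4" by (simp add: field_simps eval_nat_numeral)
  finally show ?thesis unfolding eq .
qed

lemma l_bound:
  fixes u y :: real assumes u: "u \<ge> 1/2" and y: "\<bar>y\<bar> \<le> 1/8"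
  shows "\<bar>ln (u + y) + ln (u - y) - 2 * ln u\<bar> \<le> 8 * y^2"
proof -
  define t where "t = y / u"
  have u0: "u > 0" using u by simp
  have yt: "y = u * t" unfolding t_def using u0 by simp
  have ta: "\<bar>t\<bar> \<le> 1/4"
  proof -
    have "\<bar>t\<bar> = \<bar>y\<bar> / u" unfolding t_def using u0 by simp
    also have "\<dots> \<le> (1/8) / (1/2)" by (rule frac_le) (use y u in auto)
    finally show ?thesis by simp
  qed
  have p: "1 + t > 0" "1 - t > 0" using ta by auto
  have l1: "ln (u + y) = ln u + ln (1 + t)"
  proof -
    have "u + y = u * (1 + t)" unfolding yt by (simp add: algebra_simps)
    then have "ln (u + y) = ln (u * (1 + t))" by simp
    also have "\<dots> = ln u + ln (1 + t)" using u0 p by (simp add: ln_mult)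
    finally show ?thesis .
  qed
  have l2: "ln (u - y) = ln u + ln (1 - t)"
  proof -
    have "u - y = u * (1 - t)" unfolding yt by (simp add: algebra_simps)
    then have "ln (u - y) = ln (u * (1 - t))" by simp
    also have "\<dots> = ln u + ln (1 - t)" using u0 p by (simp add: ln_mult)
    finally show ?thesis .
  qed
  have t2: "t^2 \<le> 1/16"
  proof -
    have "t^2 = \<bar>t\<bar>^2" by simp
    also have "\<dots> \<le> (1/4)^2" by (rule power_mono) (use ta in auto)
    also have "(1/4::real)^2 = 1/16" by (simp add: power2_eq_square)
    finally show ?thesis .
  qed
  have e: "ln (1 + t) + ln (1 - t) = ln (1 + (- (t^2)))"
  proof -
    have "1 + (- (t^2)) = (1 + t) * (1 - t)" by (simp add: algebra_simps power2_eq_square)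
    then have "ln (1 + (- (t^2))) = ln ((1 + t) * (1 - t))" by simp
    also have "\<dots> = ln (1 + t) + ln (1 - t)" using p by (simp add: ln_mult)
    finally show ?thesis by simp
  qed
  have s: "\<bar>- (t^2)\<bar> < 1" using t2 by simp
  have "\<bar>ln (1 + (- (t^2)))\<bar> \<le> \<bar>- (t^2)\<bar>^(0+1) / (1 - \<bar>- (t^2)\<bar>)"
    using ln_taylor[of "- (t^2)" 0, OF s] by simp
  also have "\<dots> = t^2 / (1 - (t^2))" by simp
  also have "\<dots> \<le> t^2 / (1/2)"
    by (rule divide_left_mono) (use t2 in auto)
  also have "\<dots> = 2 * y^2 / u^2" unfolding yt using u0 by (simp add: field_simps)
  also have "\<dots> \<le> 2 * y^2 / (1/2)^2"
    by (rule divide_left_mono) (use u in \<open>auto intro!: power_mono\<close>)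
  also have "\<dots> = 8 * y^2" by (simp add: field_simps power2_eq_square)
  finally show ?thesis unfolding l1 l2 using e by simp
qed


definition Fs :: "real \<Rightarrow> real" where "Fs z = (z + 1/2) * ln z - z"

lemma bracket_identity:
  fixes M x y :: real
  assumes M: "M > 0" and p: "1 + x > 0" "1 - x > 0" "1 + x + y > 0" "1 - x - y > 0" "1 + x - y > 0" "1 - x + y > 0"
  shows "2 * Fs (2 * M) + Fs (2 * M * (1 + x)) + Fs (2 * M * (1 - x)) - Fs (4 * M)
     - Fs (M * (1 + x + y)) - Fs (M * (1 - x - y)) - Fs (M * (1 + x - y)) - Fs (M * (1 - x + y))
   = ln 2 - ln M / 2
     + M * (2 * (1 + x) * ln (1 + x) + 2 * (1 - x) * ln (1 - x)
        - (1 + x + y) * ln (1 + x + y) - (1 + x - y) * ln (1 + x - y)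
        - (1 - x + y) * ln (1 - x + y) - (1 - x - y) * ln (1 - x - y))
     + (ln (1 + x) + ln (1 - x) - ln (1 + x + y) - ln (1 + x - y) - ln (1 - x + y) - ln (1 - x - y)) / 2"
proof -
  have l4: "ln (4::real) = 2 * ln 2" using ln_realpow[of 2 2] by simp
  have e1: "ln (2 * M) = ln 2 + ln M" using M by (simp add: ln_mult)
  have e2: "ln (2 * M * v) = ln 2 + ln M + ln v" if "v > 0" for v using M that by (simp add: ln_mult)
  have e3: "ln (4 * M) = 2 * ln 2 + ln M" using M l4 by (simp add: ln_mult)
  have e4: "ln (M * v) = ln M + ln v" if "v > 0" for v using M that by (simp add: ln_mult)
  show ?thesis unfolding Fs_def e1 e3 e2[OF p(1)] e2[OF p(2)] e4[OF p(3)] e4[OF p(4)] e4[OF p(5)] e4[OF p(6)]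
    by (simp add: field_simps)
qed


lemma main_real:
  fixes M x y :: real
  assumes M: "M > 0" and x: "\<bar>x\<bar> \<le> 1/2" and y: "\<bar>y\<bar> \<le> 1/8"
  shows "\<bar>(2 * Fs (2 * M) + Fs (2 * M * (1 + x)) + Fs (2 * M * (1 - x)) - Fs (4 * M)
     - Fs (M * (1 + x + y)) - Fs (M * (1 - x - y)) - Fs (M * (1 + x - y)) - Fs (M * (1 - x + y)))
     - (ln 2 - ln M / 2 - ln (1 - x^2) / 2 - 2 * M * y^2 / (1 - x^2))\<bar> \<le> 64 * M * y^4 + 8 * y^2"
proof -
  have p: "1 + x > 0" "1 - x > 0" "1 + x + y > 0" "1 - x - y > 0" "1 + x - y > 0" "1 - x + y > 0"
    using x y by auto
  have u1: "1 + x \<ge> 1/2" and u2: "1 - x \<ge> 1/2" using x by auto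
  define E1 where "E1 = (1 + x + y) * ln (1 + x + y) + (1 + x - y) * ln (1 + x - y) - 2 * (1 + x) * ln (1 + x) - y^2 / (1 + x)"
  define E2 where "E2 = (1 - x + y) * ln (1 - x + y) + (1 - x - y) * ln (1 - x - y) - 2 * (1 - x) * ln (1 - x) - y^2 / (1 - x)"
  define D1 where "D1 = ln (1 + x + y) + ln (1 + x - y) - 2 * ln (1 + x)"
  define D2 where "D2 = ln (1 - x + y) + ln (1 - x - y) - 2 * ln (1 - x)"
  have bE1: "\<bar>E1\<bar> \<le> 32 * y^4" using h_bound[OF u1 y] unfolding E1_def by (simp add: add.assoc diff_add_eq)
  have bE2: "\<bar>E2\<bar> \<le> 32 * y^4" using h_bound[OF u2 y] unfolding E2_def by (simp add: add.assoc diff_add_eq)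
  have bD1: "\<bar>D1\<bar> \<le> 8 * y^2" using l_bound[OF u1 y] unfolding D1_def by (simp add: add.assoc diff_add_eq)
  have bD2: "\<bar>D2\<bar> \<le> 8 * y^2" using l_bound[OF u2 y] unfolding D2_def by (simp add: add.assoc diff_add_eq)
  have lx: "ln (1 - x^2) = ln (1 + x) + ln (1 - x)"
  proof -
    have "1 - x^2 = (1 + x) * (1 - x)" by (simp add: algebra_simps power2_eq_square)
    then have "ln (1 - x^2) = ln ((1 + x) * (1 - x))" by simp
    also have "\<dots> = ln (1 + x) + ln (1 - x)" using p by (simp add: ln_mult)
    finally show ?thesis .
  qed
  have x2: "1 - x^2 = (1 + x) * (1 - x)" by (simp add: algebra_simps power2_eq_square)
  have yy: "y^2 / (1 + x) + y^2 / (1 - x) = 2 * y^2 / (1 - x^2)"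
    using p by (simp add: field_simps power2_eq_square)
  have eq: "(2 * Fs (2 * M) + Fs (2 * M * (1 + x)) + Fs (2 * M * (1 - x)) - Fs (4 * M)
     - Fs (M * (1 + x + y)) - Fs (M * (1 - x - y)) - Fs (M * (1 + x - y)) - Fs (M * (1 - x + y)))
     - (ln 2 - ln M / 2 - ln (1 - x^2) / 2 - 2 * M * y^2 / (1 - x^2))
     = - M * (E1 + E2) - (D1 + D2) / 2"
  proof -
    have phi: "2 * (1 + x) * ln (1 + x) + 2 * (1 - x) * ln (1 - x)
        - (1 + x + y) * ln (1 + x + y) - (1 + x - y) * ln (1 + x - y)
        - (1 - x + y) * ln (1 - x + y) - (1 - x - y) * ln (1 - x - y) = - (E1 + E2) - 2 * y^2 / (1 - x^2)"
      unfolding yy[symmetric] E1_def E2_def by (simp add: algebra_simps)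
    have lam: "ln (1 + x) + ln (1 - x) - ln (1 + x + y) - ln (1 + x - y) - ln (1 - x + y) - ln (1 - x - y)
       = - (D1 + D2) - ln (1 + x) - ln (1 - x)"
      unfolding D1_def D2_def by (simp add: algebra_simps)
    show ?thesis unfolding bracket_identity[OF M p] phi lam lx by (simp add: field_simps)
  qed
  have "\<bar>- M * (E1 + E2) - (D1 + D2) / 2\<bar> \<le> M * \<bar>E1 + E2\<bar> + \<bar>D1 + D2\<bar> / 2"
    using M abs_triangle_ineq4[of "- (M * (E1 + E2))" "(D1 + D2) / 2"] by (simp add: abs_mult)
  also have "\<dots> \<le> M * (64 * y^4) + 16 * y^2 / 2"
  proof (intro add_mono mult_left_mono divide_right_mono)
    show "\<bar>E1 + E2\<bar> \<le> 64 * y^4" using bE1 bE2 by simp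
    show "\<bar>D1 + D2\<bar> \<le> 16 * y^2" using bD1 bD2 by simp
  qed (use M in auto)
  finally show ?thesis unfolding eq by simp
qed


lemma stir2:
  fixes n :: nat and M :: real
  assumes M: "M > 0" and n: "real n \<ge> 3 * M / 8"
  shows "\<exists>r. ln (fact n :: real) = Fs (real n) + ln (2 * pi) / 2 + r \<and> \<bar>r\<bar> \<le> 11 / M"
proof -
  have np: "real n > 0" using M n by linarith
  then have n1: "n \<ge> 1" by simp
  have "4 / real n \<le> 4 / (3 * M / 8)" by (rule divide_left_mono) (use n M in auto)
  also have "\<dots> \<le> 11 / M" using M by (simp add: field_simps)
  finally have b: "4 / real n \<le> 11 / M" .
  show ?thesis
    by (rule exI[of _ "ln (fact n) - (Fs (real n) + ln (2 * pi) / 2)"])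
       (use stirling_ln[OF n1] b in \<open>auto simp: Fs_def\<close>)
qed

lemma core:
  fixes l j :: int and m :: nat
  assumes m: "m > 0" and hl: "\<bar>real_of_int l\<bar> \<le> real m / 2" and hj: "\<bar>real_of_int j\<bar> \<le> real m / 8"
  shows "\<exists>e. \<bar>e\<bar> \<le> 107 / real m + 72 * (real_of_int j ^ 4 / real m ^ 3) \<and>
    cond_prob (srw_steps (4 * m)) {xs. S (2 * m) xs = 2 * j + 2 * l} {xs. S (4 * m) xs = 4 * l}
    = exp (ln 2 - ln (2 * pi) / 2 - ln (real m) / 2 - ln (1 - (real_of_int l / real m)^2) / 2
        - (2 * real_of_int j)^2 / (2 * real m * (1 - (real_of_int l / real m)^2)) + e)"
proof -
  define M where "M = real m"
  define x where "x = real_of_int l / M"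
  define y where "y = real_of_int j / M"
  have M0: "M > 0" using m unfolding M_def by simp
  have il: "2 * \<bar>l\<bar> \<le> int m"
  proof -
    have "real_of_int (2 * \<bar>l\<bar>) \<le> real_of_int (int m)" using hl by simp
    then show ?thesis by linarith
  qed
  have ij: "8 * \<bar>j\<bar> \<le> int m"
  proof -
    have "real_of_int (8 * \<bar>j\<bar>) \<le> real_of_int (int m)" using hj by simp
    then show ?thesis by linarith
  qed
  define a where "a = nat (int m + l + j)"
  define a' where "a' = nat (int m - l - j)"
  define b where "b = nat (int m + l - j)"
  define b' where "b' = nat (int m - l + j)"
  define d where "d = nat (2 * int m + 2 * l)"
  define d' where "d' = nat (2 * int m - 2 * l)"
  have ia: "int a = int m + l + j" "int a' = int m - l - j" "int b = int m + l - j" "int b' = int m - l + j"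
     "int d = 2 * int m + 2 * l" "int d' = 2 * int m - 2 * l"
    unfolding a_def a'_def b_def b'_def d_def d'_def using il ij by auto
  have sa: "2 * m - a = a'" "2 * m - b = b'" "4 * m - d = d'" "a \<le> 2 * m" "b \<le> 2 * m" "d \<le> 4 * m"
    using ia by linarith+
  have mx: "M * (1 + x + y) = M + l + j" "M * (1 - x - y) = M - l - j" "M * (1 + x - y) = M + l - j"
     "M * (1 - x + y) = M - l + j" "2 * M * (1 + x) = 2 * M + 2 * l" "2 * M * (1 - x) = 2 * M - 2 * l"
    unfolding x_def y_def using M0 by (simp_all add: field_simps)
  have ra: "real a = M * (1 + x + y)" "real a' = M * (1 - x - y)" "real b = M * (1 + x - y)"
     "real b' = M * (1 - x + y)" "real d = 2 * M * (1 + x)" "real d' = 2 * M * (1 - x)"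
    unfolding mx unfolding M_def
    using arg_cong[OF ia(1), of real_of_int] arg_cong[OF ia(2), of real_of_int] arg_cong[OF ia(3), of real_of_int]
      arg_cong[OF ia(4), of real_of_int] arg_cong[OF ia(5), of real_of_int] arg_cong[OF ia(6), of real_of_int]
    by simp_all
  have hx: "\<bar>x\<bar> \<le> 1/2" unfolding x_def using hl M0 M_def by (simp add: abs_div field_simps)
  have hy: "\<bar>y\<bar> \<le> 1/8" unfolding y_def using hj M0 M_def by (simp add: abs_div field_simps)
  have hl': "\<bar>real_of_int l\<bar> \<le> M / 2" and hj': "\<bar>real_of_int j\<bar> \<le> M / 8" using hl hj M_def by simp_all
  have rr: "real a = M + l + j" "real a' = M - l - j" "real b = M + l - j" "real b' = M - l + j"
     "real d = 2 * M + 2 * l" "real d' = 2 * M - 2 * l" using ra mx by simp_all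
  have lo: "real a \<ge> 3 * M / 8" "real a' \<ge> 3 * M / 8" "real b \<ge> 3 * M / 8" "real b' \<ge> 3 * M / 8"
     "real d \<ge> 3 * M / 8" "real d' \<ge> 3 * M / 8" "real (2 * m) \<ge> 3 * M / 8" "real (4 * m) \<ge> 3 * M / 8"
    unfolding rr using hl' hj' M0 by (simp_all add: abs_le_iff M_def)
  define c where "c = ln (2 * pi) / 2"
  obtain r1 where r1: "ln (fact (2 * m) :: real) = Fs (2 * M) + c + r1" "\<bar>r1\<bar> \<le> 11 / M"
    using stir2[OF M0 lo(7)] unfolding c_def M_def by auto
  obtain r2 where r2: "ln (fact (4 * m) :: real) = Fs (4 * M) + c + r2" "\<bar>r2\<bar> \<le> 11 / M"
    using stir2[OF M0 lo(8)] unfolding c_def M_def by auto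
  obtain r3 where r3: "ln (fact a :: real) = Fs (M * (1 + x + y)) + c + r3" "\<bar>r3\<bar> \<le> 11 / M"
    using stir2[OF M0 lo(1)] unfolding c_def ra by auto
  obtain r4 where r4: "ln (fact a' :: real) = Fs (M * (1 - x - y)) + c + r4" "\<bar>r4\<bar> \<le> 11 / M"
    using stir2[OF M0 lo(2)] unfolding c_def ra by auto
  obtain r5 where r5: "ln (fact b :: real) = Fs (M * (1 + x - y)) + c + r5" "\<bar>r5\<bar> \<le> 11 / M"
    using stir2[OF M0 lo(3)] unfolding c_def ra by auto
  obtain r6 where r6: "ln (fact b' :: real) = Fs (M * (1 - x + y)) + c + r6" "\<bar>r6\<bar> \<le> 11 / M"
    using stir2[OF M0 lo(4)] unfolding c_def ra by auto
  obtain r7 where r7: "ln (fact d :: real) = Fs (2 * M * (1 + x)) + c + r7" "\<bar>r7\<bar> \<le> 11 / M"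
    using stir2[OF M0 lo(5)] unfolding c_def ra by auto
  obtain r8 where r8: "ln (fact d' :: real) = Fs (2 * M * (1 - x)) + c + r8" "\<bar>r8\<bar> \<le> 11 / M"
    using stir2[OF M0 lo(6)] unfolding c_def ra by auto
  define P where "P = (fact (2 * m) :: real) / (fact a * fact a') * (fact (2 * m) / (fact b * fact b'))
      / (fact (4 * m) / (fact d * fact d'))"
  have cp: "cond_prob (srw_steps (4 * m)) {xs. S (2 * m) xs = 2 * j + 2 * l} {xs. S (4 * m) xs = 4 * l} = P"
  proof -
    have "cond_prob (srw_steps (4 * m)) {xs. S (2 * m) xs = 2 * j + 2 * l} {xs. S (4 * m) xs = 4 * l}
       = real ((2*m) choose a) * real ((2*m) choose b) / real ((4*m) choose d)"
      by (rule cond_prob_binom) (use ia in auto)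
    also have "\<dots> = P" unfolding P_def binomial_fact[OF sa(4)] binomial_fact[OF sa(5)] binomial_fact[OF sa(6)] sa(1-3)
      by simp
    finally show ?thesis .
  qed
  have P0: "P > 0" unfolding P_def by simp
  have lnP: "ln P = 2 * ln (fact (2 * m)) + ln (fact d) + ln (fact d') - ln (fact (4 * m))
      - ln (fact a) - ln (fact a') - ln (fact b) - ln (fact b')"
    unfolding P_def by (simp add: ln_div ln_mult)
  define R where "R = 2 * r1 + r7 + r8 - r2 - r3 - r4 - r5 - r6"
  have bR: "\<bar>R\<bar> \<le> 99 / M" unfolding R_def using r1(2) r2(2) r3(2) r4(2) r5(2) r6(2) r7(2) r8(2)
    by (simp add: abs_le_iff)
  define Br where "Br = 2 * Fs (2 * M) + Fs (2 * M * (1 + x)) + Fs (2 * M * (1 - x)) - Fs (4 * M)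
     - Fs (M * (1 + x + y)) - Fs (M * (1 - x - y)) - Fs (M * (1 + x - y)) - Fs (M * (1 - x + y))"
  have lnP2: "ln P = Br - c + R"
    unfolding lnP r1(1) r2(1) r3(1) r4(1) r5(1) r6(1) r7(1) r8(1) Br_def R_def by simp
  define mn where "mn = ln 2 - ln M / 2 - ln (1 - x^2) / 2 - 2 * M * y^2 / (1 - x^2)"
  have bB: "\<bar>Br - mn\<bar> \<le> 64 * M * y^4 + 8 * y^2"
    unfolding Br_def mn_def by (rule main_real[OF M0 hx hy])
  define e where "e = ln P - (mn - c)"
  have y2: "y^2 \<le> 1 / M + M * y^4"
  proof (cases "M * y^2 \<le> 1")
    case True
    then have "y^2 \<le> 1 / M" using M0 by (simp add: field_simps)
    moreover have "M * y^4 \<ge> 0" using M0 by simp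
    ultimately show ?thesis by linarith
  next
    case False
    then have "y^2 * 1 \<le> y^2 * (M * y^2)" by (intro mult_left_mono) auto
    then have "y^2 \<le> M * y^4" by (simp add: eval_nat_numeral algebra_simps)
    moreover have "1 / M \<ge> 0" using M0 by simp
    ultimately show ?thesis by linarith
  qed
  have My: "M * y^4 = real_of_int j ^ 4 / real m ^ 3" unfolding y_def M_def using M0 M_def
    by (simp add: field_simps eval_nat_numeral)
  have be: "\<bar>e\<bar> \<le> 107 / real m + 72 * (real_of_int j ^ 4 / real m ^ 3)"
  proof -
    have "e = (Br - mn) + R" unfolding e_def lnP2 by simp
    then have "\<bar>e\<bar> \<le> 64 * M * y^4 + 8 * y^2 + 99 / M" using bB bR by (simp add: abs_le_iff)
    also have "\<dots> \<le> 64 * M * y^4 + 8 * (1 / M + M * y^4) + 99 / M" using y2 by simp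
    also have "\<dots> = 107 / M + 72 * (M * y^4)" by (simp add: algebra_simps)
    finally show ?thesis unfolding My unfolding M_def .
  qed
  have fx: "real_of_int l / real m = x" unfolding x_def M_def ..
  have fq: "(2 * real_of_int j)^2 / (2 * real m * (1 - x^2)) = 2 * M * y^2 / (1 - x^2)"
  proof -
    have "2 * M * y^2 = (2 * real_of_int j)^2 / (2 * real m)" unfolding y_def M_def using M0 M_def
      by (simp add: field_simps power2_eq_square)
    then show ?thesis by simp
  qed
  show ?thesis
  proof (intro exI conjI)
    show "\<bar>e\<bar> \<le> 107 / real m + 72 * (real_of_int j ^ 4 / real m ^ 3)" by (rule be)
    have "P = exp (ln P)" using P0 by simp
    also have "ln P = ln 2 - ln (2 * pi) / 2 - ln (real m) / 2 - ln (1 - x^2) / 2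
        - (2 * real_of_int j)^2 / (2 * real m * (1 - x^2)) + e"
      unfolding e_def fq mn_def c_def M_def by simp
    finally show "cond_prob (srw_steps (4 * m)) {xs. S (2 * m) xs = 2 * j + 2 * l} {xs. S (4 * m) xs = 4 * l}
      = exp (ln 2 - ln (2 * pi) / 2 - ln (real m) / 2 - ln (1 - (real_of_int l / real m)^2) / 2
        - (2 * real_of_int j)^2 / (2 * real m * (1 - (real_of_int l / real m)^2)) + e)"
      unfolding cp fx .
  qed
qed


lemma sqrt_part:
  fixes M x :: real assumes M: "M > 0" and x: "1 - x^2 > 0"
  shows "2 * sqrt (1 / (2 * pi * M * (1 - x^2))) = exp (ln 2 - ln (2 * pi) / 2 - ln M / 2 - ln (1 - x^2) / 2)"
proof -
  define K where "K = 2 * pi * M * (1 - x^2)"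
  have K0: "K > 0" unfolding K_def using M x by simp
  have lK: "ln K = ln (2 * pi) + ln M + ln (1 - x^2)" unfolding K_def using M x
    by (simp add: ln_mult del: ln_mult_pos)
  have "2 * sqrt (1 / K) > 0" using K0 by simp
  then have "2 * sqrt (1 / K) = exp (ln (2 * sqrt (1 / K)))" by simp
  also have "ln (2 * sqrt (1 / K)) = ln 2 + ln (1 / K) / 2" using K0 by (simp add: ln_mult ln_sqrt del: ln_mult_pos)
  also have "\<dots> = ln 2 - ln (2 * pi) / 2 - ln M / 2 - ln (1 - x^2) / 2" using K0 lK by (simp add: ln_div)
  finally show ?thesis unfolding K_def .
qed

theorem lemma6:
  shows "\<exists>C::real. \<forall>(l::int) (m::nat) (j::int).
    m > 0 \<and> \<bar>real_of_int l\<bar> \<le> real m / 2 \<and> \<bar>real_of_int j\<bar> \<le> real m / 8 \<longrightarrow>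
    (\<exists>e1 e2::real. \<bar>e1\<bar> \<le> C * (1 / real m) \<and> \<bar>e2\<bar> \<le> C * (real_of_int j ^ 4 / real m ^ 3) \<and>
      cond_prob (srw_steps (4 * m))
        {xs. S (2 * m) xs = 2 * j + 2 * l} {xs. S (4 * m) xs = 4 * l}
      = 2 * sqrt (1 / (2 * pi * real m * (1 - (real_of_int l / real m)^2)))
          * exp (- ((2 * real_of_int j)^2) / (2 * real m * (1 - (real_of_int l / real m)^2)) + e1 + e2))"
proof (rule exI[of _ 200], intro allI impI)
  fix l j :: int and m :: nat
  assume h: "m > 0 \<and> \<bar>real_of_int l\<bar> \<le> real m / 2 \<and> \<bar>real_of_int j\<bar> \<le> real m / 8"
  then have m: "m > 0" and hl: "\<bar>real_of_int l\<bar> \<le> real m / 2" and hj: "\<bar>real_of_int j\<bar> \<le> real m / 8" by auto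
  obtain e where be: "\<bar>e\<bar> \<le> 107 / real m + 72 * (real_of_int j ^ 4 / real m ^ 3)" and
    eq: "cond_prob (srw_steps (4 * m)) {xs. S (2 * m) xs = 2 * j + 2 * l} {xs. S (4 * m) xs = 4 * l}
    = exp (ln 2 - ln (2 * pi) / 2 - ln (real m) / 2 - ln (1 - (real_of_int l / real m)^2) / 2
        - (2 * real_of_int j)^2 / (2 * real m * (1 - (real_of_int l / real m)^2)) + e)"
    using core[OF m hl hj] by blast
  define x where "x = real_of_int l / real m"
  define p where "p = 1 / real m"
  define q where "q = real_of_int j ^ 4 / real m ^ 3"
  have p0: "p > 0" unfolding p_def using m by simp
  have q0: "q \<ge> 0" unfolding q_def using m by simp
  have pq: "p + q > 0" using p0 q0 by simp
  have x2: "1 - x^2 > 0"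
  proof -
    have "\<bar>x\<bar> \<le> 1/2" unfolding x_def using hl m by (simp add: abs_div field_simps)
    then have "x^2 \<le> (1/2)^2" using power_mono[of "\<bar>x\<bar>" "1/2" 2] by simp
    then show ?thesis by (simp add: power2_eq_square)
  qed
  have be2: "\<bar>e\<bar> \<le> 200 * (p + q)"
  proof -
    have "107 / real m = 107 * p" unfolding p_def by simp
    then have "\<bar>e\<bar> \<le> 107 * p + 72 * q" using be unfolding q_def[symmetric] by simp
    then show ?thesis using p0 q0 by (simp add: distrib_left)
  qed
  define e1 where "e1 = e * p / (p + q)"
  define e2 where "e2 = e * q / (p + q)"
  have s: "e1 + e2 = e" unfolding e1_def e2_def add_divide_distrib[symmetric] distrib_left[symmetric]
    using pq by simp
  have "\<bar>e1\<bar> = \<bar>e\<bar> / (p + q) * p" unfolding e1_def using p0 pq by (simp add: abs_mult)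
  also have "\<dots> \<le> 200 * p"
  proof -
    have "\<bar>e\<bar> / (p + q) \<le> 200" using be2 pq by (simp add: divide_le_eq)
    then show ?thesis using mult_right_mono[of "\<bar>e\<bar> / (p + q)" 200 p] p0 by simp
  qed
  finally have b1: "\<bar>e1\<bar> \<le> 200 * (1 / real m)" unfolding p_def .
  have "\<bar>e2\<bar> = \<bar>e\<bar> / (p + q) * q" unfolding e2_def using q0 pq by (simp add: abs_mult)
  also have "\<dots> \<le> 200 * q"
  proof -
    have "\<bar>e\<bar> / (p + q) \<le> 200" using be2 pq by (simp add: divide_le_eq)
    then show ?thesis using mult_right_mono[of "\<bar>e\<bar> / (p + q)" 200 q] q0 by simp
  qed
  finally have b2: "\<bar>e2\<bar> \<le> 200 * (real_of_int j ^ 4 / real m ^ 3)" unfolding q_def .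
  have mm: "real m > 0" using m by simp
  have fin: "cond_prob (srw_steps (4 * m))
        {xs. S (2 * m) xs = 2 * j + 2 * l} {xs. S (4 * m) xs = 4 * l}
      = 2 * sqrt (1 / (2 * pi * real m * (1 - (real_of_int l / real m)^2)))
          * exp (- ((2 * real_of_int j)^2) / (2 * real m * (1 - (real_of_int l / real m)^2)) + e1 + e2)"
    unfolding eq x_def[symmetric] sqrt_part[OF mm x2] add.assoc[symmetric, of _ e1 e2] add.assoc s
      exp_add[symmetric]
    by (simp add: algebra_simps)
  show "\<exists>e1 e2::real. \<bar>e1\<bar> \<le> 200 * (1 / real m) \<and> \<bar>e2\<bar> \<le> 200 * (real_of_int j ^ 4 / real m ^ 3) \<and>
      cond_prob (srw_steps (4 * m))
        {xs. S (2 * m) xs = 2 * j + 2 * l} {xs. S (4 * m) xs = 4 * l}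
      = 2 * sqrt (1 / (2 * pi * real m * (1 - (real_of_int l / real m)^2)))
          * exp (- ((2 * real_of_int j)^2) / (2 * real m * (1 - (real_of_int l / real m)^2)) + e1 + e2)"
    using b1 b2 fin by blast
qed


end
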